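(* Let $G$ be a finite simple graph with at least one edge, and let $R(G)$ be its regularization. Then $$\frac{|V(R(G))|}{\mathrm{es}_{\Delta}(R(G))}\leq \frac{|V(G)|}{\mathrm{es}_{\Delta}(G)}.$$
   Context: $\mathrm{es}_{\Delta}(H)$ is the minimum number of edges of $H$ whose removal results in a subgraph with maximum degree $\Delta(H)-1$. $\mathrm{core}(H)$ is the set of vertices of maximum degree in $H$. The regularization $R(G)$ is defined as follows. If $G$ is regular, $R(G)=G$. Otherwise, let $A_G=V(G)\setminus\mathrm{core}(G)$, and let $G^{(1)}$ be obtained from two disjoint copies $G'$ and $G''$ of $G$ by adding an edge between each vertex of $A_{G'}$ and its corresponding copy in $A_{G''}$ (so $\Delta(G^{(1)})=\Delta(G)$ and $\delta(G^{(1)})=\delta(G)+1$). Iterating this construction, $G^{(i+1)}=(G^{(i)})^{(1)}$, and $R(G)=G^{(\Delta(G)-\delta(G))}$, which is $\Delta(G)$-regular. *)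

theory Defs
  imports Complex_Main
begin

type_synonym 'v graph = "'v set \<times> 'v set set"

definition verts :: "'v graph \<Rightarrow> 'v set" where "verts G = fst G"
definition edges :: "'v graph \<Rightarrow> 'v set set" where "edges G = snd G"

definition finite_simple_graph :: "'v graph \<Rightarrow> bool" where
  "finite_simple_graph G \<longleftrightarrow> finite (verts G) \<and>
     (\<forall>e\<in>edges G. \<exists>u v. e = {u, v} \<and> u \<noteq> v \<and> u \<in> verts G \<and> v \<in> verts G)"

definition degree :: "'v graph \<Rightarrow> 'v \<Rightarrow> nat" where
  "degree G v = card {e \<in> edges G. v \<in> e}"

definition maxdeg :: "'v graph \<Rightarrow> nat" where
  "maxdeg G = Max (degree G ` verts G)"

definition mindeg :: "'v graph \<Rightarrow> nat" where
  "mindeg G = Min (degree G ` verts G)"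

definition core :: "'v graph \<Rightarrow> 'v set" where
  "core G = {v \<in> verts G. degree G v = maxdeg G}"

definition es_Delta :: "'v graph \<Rightarrow> nat" where
  "es_Delta G = (LEAST k. \<exists>F \<subseteq> edges G. card F = k \<and>
       maxdeg (verts G, edges G - F) = maxdeg G - 1)"

text \<open>Embedding a graph on 'a into vertex type 'a \<times> bool list (copy tags).\<close>
definition lift :: "'a graph \<Rightarrow> ('a \<times> bool list) graph" where
  "lift G = ((\<lambda>v. (v, [])) ` verts G, (\<lambda>e. (\<lambda>v. (v, [])) ` e) ` edges G)"

definition double :: "('a \<times> bool list) graph \<Rightarrow> ('a \<times> bool list) graph" where
  "double G =
    ({(v, b # bs) | v bs b. (v, bs) \<in> verts G},
     {(\<lambda>(v, bs). (v, b # bs)) ` e | e b. e \<in> edges G}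
     \<union> {{(v, True # bs), (v, False # bs)} | v bs. (v, bs) \<in> verts G - core G})"

definition regularization :: "('a \<times> bool list) graph \<Rightarrow> ('a \<times> bool list) graph" where
  "regularization G = (double ^^ (maxdeg G - mindeg G)) G"

end

theory Submission
  imports Defs
begin

definition deg :: "'v set set \<Rightarrow> 'v \<Rightarrow> nat" where "deg E v = card {e\<in>E. v\<in>e}"
definition md :: "'v set \<Rightarrow> 'v set set \<Rightarrow> nat" where "md V E = Max (deg E ` V)"

lemma degree_pair: "degree (V,E) = deg E"
  by (rule ext) (simp add: degree_def deg_def edges_def)

lemma maxdeg_pair: "maxdeg (V,E) = md V E"
  by (simp add: maxdeg_def md_def verts_def degree_pair)

lemma es_pair: "es_Delta (V,E) = (LEAST k. \<exists>F\<subseteq>E. card F = k \<and> md V (E-F) = md V E - 1)"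
  by (simp add: es_Delta_def maxdeg_pair verts_def edges_def)

lemma core_pair: "core (V,E) = {v\<in>V. deg E v = md V E}"
  by (simp add: core_def maxdeg_pair verts_def degree_pair)

lemma md_ge: "finite V \<Longrightarrow> x\<in>V \<Longrightarrow> deg E x \<le> md V E"
  unfolding md_def by simp

lemma md_leI: "finite V \<Longrightarrow> V \<noteq> {} \<Longrightarrow> (\<And>x. x\<in>V \<Longrightarrow> deg E x \<le> c) \<Longrightarrow> md V E \<le> c"
  unfolding md_def by simp

lemma deg_remove_le: "finite E \<Longrightarrow> deg (E - F) x \<le> deg E x"
  unfolding deg_def by (rule card_mono) auto

lemma deg_insert_le: "finite E \<Longrightarrow> deg (E - F) x \<le> deg (E - insert e F) x + 1"
proof -
  assume fE: "finite E"
  have "{e' \<in> E - F. x \<in> e'} \<subseteq> insert e {e' \<in> E - insert e F. x \<in> e'}" by auto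
  hence "card {e' \<in> E - F. x \<in> e'} \<le> card (insert e {e' \<in> E - insert e F. x \<in> e'})"
    by (rule card_mono[rotated]) (use fE in auto)
  also have "\<dots> \<le> card {e' \<in> E - insert e F. x \<in> e'} + 1"
    using fE by (simp add: card_insert_if)
  finally show ?thesis unfolding deg_def .
qed

lemma md_empty: "finite V \<Longrightarrow> V \<noteq> {} \<Longrightarrow> md V {} = 0"
  using md_leI[of V "{}" 0] by (simp add: deg_def)

lemma exists_exact:
  assumes fV: "finite V" and nV: "V\<noteq>{}" and fE: "finite E" and FE: "F \<subseteq> E"
    and le: "md V (E-F) \<le> md V E - 1" and pos: "md V E \<ge> 1"
  shows "\<exists>F'\<subseteq>F. md V (E-F') = md V E - 1"
proof -
  have "finite F" using FE fE finite_subset by blast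
  from this FE le show ?thesis
  proof (induct F rule: finite_induct)
    case empty
    then show ?case using pos by simp
  next
    case (insert e F0)
    show ?case
    proof (cases "md V (E - insert e F0) = md V E - 1")
      case True
      then show ?thesis by blast
    next
      case False
      with insert have lt: "md V (E - insert e F0) < md V E - 1" by simp
      have "md V (E - F0) \<le> md V E - 1"
      proof (rule md_leI[OF fV nV])
        fix x assume "x\<in>V"
        have "deg (E - F0) x \<le> deg (E - insert e F0) x + 1" by (rule deg_insert_le[OF fE])
        also have "deg (E - insert e F0) x \<le> md V (E - insert e F0)" by (rule md_ge[OF fV \<open>x\<in>V\<close>])
        finally show "deg (E - F0) x \<le> md V E - 1" using lt by simp
      qed
      with insert obtain F' where "F' \<subseteq> F0" "md V (E-F') = md V E - 1" by auto
      then show ?thesis by blast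
    qed
  qed
qed

lemma es_facts:
  assumes fV: "finite V" and nV: "V\<noteq>{}" and fE: "finite E" and pos: "md V E \<ge> 1"
  shows "\<exists>F\<subseteq>E. card F = es_Delta (V,E) \<and> md V (E-F) = md V E - 1"
    and "\<And>F. F\<subseteq>E \<Longrightarrow> md V (E-F) \<le> md V E - 1 \<Longrightarrow> es_Delta (V,E) \<le> card F"
proof -
  fix F assume FE: "F\<subseteq>E" and le: "md V (E-F) \<le> md V E - 1"
  obtain F' where F': "F'\<subseteq>F" "md V (E-F') = md V E - 1"
    using exists_exact[OF fV nV fE FE le pos] by blast
  have "card F' \<le> card F" using F'(1) FE fE by (meson card_mono finite_subset)
  moreover have "es_Delta (V,E) \<le> card F'" unfolding es_pair
    by (rule Least_le) (use F' FE in auto)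
  ultimately show "es_Delta (V,E) \<le> card F" by simp
next
  obtain F' where F': "F'\<subseteq>E" "md V (E-F') = md V E - 1"
    using exists_exact[OF fV nV fE order_refl] md_empty[OF fV nV] pos by auto
  show "\<exists>F\<subseteq>E. card F = es_Delta (V,E) \<and> md V (E-F) = md V E - 1"
    unfolding es_pair by (rule LeastI[of _ "card F'"]) (use F' in auto)
qed


lemma inj_img: "inj f \<Longrightarrow> inj ((`) f)"
  by (auto intro: injI simp: inj_image_eq_iff)

lemma deg_image: "inj f \<Longrightarrow> deg ((`) f ` E) (f v) = deg E v"
proof -
  assume f: "inj f"
  have "{e'\<in>(`) f ` E. f v \<in> e'} = (`) f ` {e\<in>E. v\<in>e}"
    using f by (auto simp: inj_image_mem_iff dest: injD)
  moreover have "inj_on ((`) f) {e\<in>E. v\<in>e}" using inj_img[OF f] by (simp add: inj_on_def inj_def)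
  ultimately show ?thesis unfolding deg_def by (simp add: card_image)
qed

lemma md_image: "inj f \<Longrightarrow> md (f`V) ((`) f ` E) = md V E"
  unfolding md_def image_comp by (simp add: comp_def deg_image)

definition P :: "'v set \<Rightarrow> 'v set set \<Rightarrow> bool" where
  "P V E \<longleftrightarrow> finite V \<and> V \<noteq> {} \<and> finite E \<and> md V E \<ge> 1 \<and> (\<forall>e\<in>E. e \<noteq> {})"

lemma P_image: "inj f \<Longrightarrow> P V E \<Longrightarrow> P (f`V) ((`) f ` E)"
  unfolding P_def by (auto simp: md_image)

lemma es_pos: assumes "P V E" shows "es_Delta (V,E) > 0"
proof -
  from assms have fV: "finite V" and nV: "V\<noteq>{}" and fE: "finite E" and pos: "md V E \<ge> 1"
    by (auto simp: P_def)
  obtain F where F: "F\<subseteq>E" "card F = es_Delta (V,E)" "md V (E-F) = md V E - 1"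
    using es_facts(1)[OF fV nV fE pos] by blast
  show ?thesis
  proof (rule ccontr)
    assume "\<not> ?thesis"
    hence "card F = 0" using F by simp
    hence "F = {}" using F(1) fE by (meson card_0_eq finite_subset)
    thus False using F(3) pos by simp
  qed
qed

lemma lift_es:
  assumes f: "inj f" and PV: "P V E"
  shows "es_Delta (V,E) \<le> es_Delta (f`V, (`) f ` E)"
proof -
  from PV have fV: "finite V" and nV: "V\<noteq>{}" and fE: "finite E" and pos: "md V E \<ge> 1"
    by (auto simp: P_def)
  have P2: "P (f`V) ((`) f ` E)" by (rule P_image[OF f PV])
  from P2 have fV2: "finite (f`V)" and nV2: "f`V\<noteq>{}" and fE2: "finite ((`) f ` E)"
    and pos2: "md (f`V) ((`) f ` E) \<ge> 1" by (auto simp: P_def)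
  obtain F' where F': "F'\<subseteq>(`) f ` E" "card F' = es_Delta (f`V, (`) f ` E)"
     "md (f`V) ((`) f ` E - F') = md (f`V) ((`) f ` E) - 1"
    using es_facts(1)[OF fV2 nV2 fE2 pos2] by blast
  define F0 where "F0 = {e\<in>E. f`e \<in> F'}"
  have i: "inj ((`) f)" by (rule inj_img[OF f])
  have img: "(`) f ` F0 = F'" using F'(1) unfolding F0_def by auto
  have cF: "card F0 = card F'" using img i by (metis card_image inj_on_subset subset_UNIV)
  have diff: "(`) f ` E - F' = (`) f ` (E - F0)"
    using i F'(1) unfolding F0_def by (auto simp: inj_image_eq_iff)
  have "md V (E - F0) = md V E - 1"
    using F'(3) unfolding diff md_image[OF f] .
  hence "md V (E - F0) \<le> md V E - 1" by simp
  hence "es_Delta (V,E) \<le> card F0" by (rule es_facts(2)[OF fV nV fE pos, rotated]) (auto simp: F0_def)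
  thus ?thesis using cF F'(2) by simp
qed


definition tg :: "bool \<Rightarrow> ('a \<times> bool list) \<Rightarrow> ('a \<times> bool list)" where
  "tg b = (\<lambda>(v,bs). (v, b#bs))"

definition mt :: "('a \<times> bool list) \<Rightarrow> ('a \<times> bool list) set" where
  "mt = (\<lambda>(v,bs). {(v,True#bs),(v,False#bs)})"

lemma tg_eq[simp]: "tg b x = tg b' y \<longleftrightarrow> b = b' \<and> x = y"
  by (cases x; cases y) (auto simp: tg_def)

lemma inj_tg: "inj (tg b)" by (auto intro: injI)

lemma tg_in_mt: "tg b x \<in> mt y \<longleftrightarrow> x = y"
  by (cases x; cases y) (auto simp: tg_def mt_def)

lemma tg_img: "tg b ` V = {(v, b#bs) | v bs. (v,bs)\<in>V}"
  unfolding tg_def by force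

lemma double_verts: "verts (double (V,E)) = tg True ` V \<union> tg False ` V"
proof -
  have "{(v, b # bs) |v bs b. (v, bs) \<in> V} = {(v, True#bs) | v bs. (v,bs)\<in>V} \<union> {(v, False#bs) | v bs. (v,bs)\<in>V}"
  proof (rule set_eqI, rule iffI)
    fix x assume "x \<in> {(v, b # bs) |v bs b. (v, bs) \<in> V}"
    then obtain v bs b where "x = (v, b#bs)" "(v,bs)\<in>V" by blast
    thus "x \<in> {(v, True#bs) | v bs. (v,bs)\<in>V} \<union> {(v, False#bs) | v bs. (v,bs)\<in>V}"
      by (cases b) auto
  qed blast
  thus ?thesis unfolding double_def verts_def tg_img by simp
qed

lemma tgE_img: "(`) (tg b) ` E = {(\<lambda>(v, bs). (v, b # bs)) ` e | e. e \<in> E}"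
  unfolding tg_def by blast

lemma mt_img: "mt ` W = {{(v, True # bs), (v, False # bs)} |v bs. (v, bs) \<in> W}"
  unfolding mt_def by force

lemma double_edges: "edges (double (V,E)) =
   (`) (tg True) ` E \<union> (`) (tg False) ` E \<union> mt ` (V - core (V,E))"
proof -
  have "{(\<lambda>(v, bs). (v, b # bs)) ` e |e b. e \<in> E} = 
     {(\<lambda>(v, bs). (v, True # bs)) ` e | e. e \<in> E} \<union> {(\<lambda>(v, bs). (v, False # bs)) ` e | e. e \<in> E}"
  proof (rule set_eqI, rule iffI)
    fix x assume "x \<in> {(\<lambda>(v, bs). (v, b # bs)) ` e |e b. e \<in> E}"
    then obtain e b where "x = (\<lambda>(v, bs). (v, b # bs)) ` e" "e \<in> E" by blast
    thus "x \<in> {(\<lambda>(v, bs). (v, True # bs)) ` e | e. e \<in> E} \<union> {(\<lambda>(v, bs). (v, False # bs)) ` e | e. e \<in> E}"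
      by (cases b) auto
  qed blast
  note eq = this
  show ?thesis unfolding double_def edges_def verts_def fst_conv snd_conv tgE_img mt_img
    using eq by (simp only:)
qed


lemma pair_collapse: "(verts H, edges H) = H" by (simp add: verts_def edges_def)

lemma finite_dE: "finite V \<Longrightarrow> finite E \<Longrightarrow> finite (edges (double (V,E)))"
  unfolding double_edges by simp

lemma tg_in_tg: "tg b x \<in> tg b' ` e \<longleftrightarrow> b = b' \<and> x \<in> e"
  by auto

lemma deg_double_le:
  assumes fV: "finite V" and fE: "finite E" and xV: "x \<in> V"
  shows "deg (edges (double (V,E))) (tg b x) \<le> md V E"
proof -
  let ?D = "edges (double (V,E))"
  let ?A = "(`) (tg b) ` {e\<in>E. x\<in>e}"
  let ?B = "(if x \<in> core (V,E) then {} else {mt x})"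
  have sub: "{e\<in>?D. tg b x \<in> e} \<subseteq> ?A \<union> ?B"
  proof
    fix e assume "e \<in> {e\<in>?D. tg b x \<in> e}"
    hence eD: "e \<in> ?D" and xe: "tg b x \<in> e" by auto
    from eD consider (T) e0 where "e0\<in>E" "e = tg True ` e0" | (F) e0 where "e0\<in>E" "e = tg False ` e0"
      | (M) y where "y \<in> V - core (V,E)" "e = mt y"
      unfolding double_edges by blast
    thus "e \<in> ?A \<union> ?B"
    proof cases
      case T then show ?thesis using xe by (auto simp only: tg_in_tg)
    next
      case F then show ?thesis using xe by (auto simp only: tg_in_tg)
    next
      case M
      hence "y = x" using xe tg_in_mt by metis
      then show ?thesis using M by auto
    qed
  qed
  have cA: "card ?A = deg E x"
    unfolding deg_def by (rule card_image) (meson inj_img inj_tg inj_on_subset subset_UNIV)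
  have "deg ?D (tg b x) \<le> card (?A \<union> ?B)"
    unfolding deg_def by (rule card_mono) (use sub fE in auto)
  also have "\<dots> \<le> card ?A + card ?B" by (rule card_Un_le)
  also have "\<dots> \<le> md V E"
  proof (cases "x \<in> core (V,E)")
    case True
    then show ?thesis using cA md_ge[OF fV xV, of E] by simp
  next
    case False
    hence "deg E x \<noteq> md V E" using xV by (simp add: core_pair)
    then show ?thesis using False cA md_ge[OF fV xV, of E] by simp
  qed
  finally show ?thesis .
qed

lemma deg_double_ge:
  assumes fV: "finite V" and fE: "finite E"
  shows "deg (E - {e\<in>E. tg b ` e \<in> F}) x \<le> deg (edges (double (V,E)) - F) (tg b x)"
proof -
  let ?D = "edges (double (V,E))"
  have sub: "(`) (tg b) ` {e\<in>E - {e\<in>E. tg b ` e \<in> F}. x\<in>e} \<subseteq> {e\<in>?D - F. tg b x\<in>e}"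
    unfolding double_edges by (cases b) auto
  have "deg (E - {e\<in>E. tg b ` e \<in> F}) x = card ((`) (tg b) ` {e\<in>E - {e\<in>E. tg b ` e \<in> F}. x\<in>e})"
    unfolding deg_def by (rule card_image[symmetric]) (meson inj_img inj_tg inj_on_subset subset_UNIV)
  also have "\<dots> \<le> card {e\<in>?D - F. tg b x\<in>e}"
    by (rule card_mono[OF _ sub]) (use finite_dE[OF fV fE] in auto)
  finally show ?thesis unfolding deg_def .
qed


lemma double_main:
  assumes PV: "P V E"
  shows "P (verts (double (V,E))) (edges (double (V,E)))"
    and "card (verts (double (V,E))) = 2 * card V"
    and "2 * es_Delta (V,E) \<le> es_Delta (double (V,E))"
proof -
  from PV have fV: "finite V" and nV: "V\<noteq>{}" and fE: "finite E" and pos: "md V E \<ge> 1"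
    and ne: "\<forall>e\<in>E. e \<noteq> {}" by (auto simp: P_def)
  define dV where "dV = verts (double (V,E))"
  define dE where "dE = edges (double (V,E))"
  have dVeq: "dV = tg True ` V \<union> tg False ` V" unfolding dV_def by (rule double_verts)
  have fdV: "finite dV" using fV dVeq by simp
  have ndV: "dV \<noteq> {}" using nV dVeq by simp
  have fdE: "finite dE" unfolding dE_def by (rule finite_dE[OF fV fE])
  have tgV: "tg b y \<in> dV" if "y \<in> V" for b y using that dVeq by (cases b) auto
  have mdle: "md dV dE \<le> md V E"
  proof (rule md_leI[OF fdV ndV])
    fix z assume "z \<in> dV"
    then obtain b y where "y\<in>V" "z = tg b y" unfolding dVeq by blast
    thus "deg dE z \<le> md V E" unfolding dE_def using deg_double_le[OF fV fE] by simp
  qed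
  have "md V E \<in> deg E ` V" unfolding md_def using fV nV by simp
  then obtain x where xV: "x\<in>V" and dx: "deg E x = md V E" by auto
  have "deg (E - {e\<in>E. tg True ` e \<in> {}}) x \<le> deg (dE - {}) (tg True x)"
    unfolding dE_def by (rule deg_double_ge[OF fV fE])
  hence "md V E \<le> deg dE (tg True x)" using dx by simp
  also have "\<dots> \<le> md dV dE" by (rule md_ge[OF fdV tgV[OF xV]])
  finally have mdge: "md V E \<le> md dV dE" .
  have nedE: "\<forall>e\<in>dE. e \<noteq> {}" unfolding dE_def double_edges using ne by (auto simp: mt_def)
  show PdV: "P (verts (double (V,E))) (edges (double (V,E)))"
    unfolding P_def dV_def[symmetric] dE_def[symmetric] using fdV ndV fdE mdge pos nedE by simp
  have disj: "tg True ` V \<inter> tg False ` V = {}" by auto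
  show "card (verts (double (V,E))) = 2 * card V"
    unfolding dV_def[symmetric] dVeq
    using card_image[OF inj_on_subset[OF inj_tg subset_UNIV], of True V] card_image[OF inj_on_subset[OF inj_tg subset_UNIV], of False V]
    by (simp add: card_Un_disjoint[OF _ _ disj] fV)
  have pos2: "md dV dE \<ge> 1" using mdge pos by simp
  obtain F where F: "F\<subseteq>dE" "card F = es_Delta (dV,dE)" "md dV (dE-F) = md dV dE - 1"
    using es_facts(1)[OF fdV ndV fdE pos2] by blast
  define Fb where "Fb b = {e\<in>E. tg b ` e \<in> F}" for b
  have esle: "es_Delta (V,E) \<le> card (Fb b)" for b
  proof (rule es_facts(2)[OF fV nV fE pos])
    show "Fb b \<subseteq> E" unfolding Fb_def by auto
    show "md V (E - Fb b) \<le> md V E - 1"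
    proof (rule md_leI[OF fV nV])
      fix y assume yV: "y \<in> V"
      have "deg (E - Fb b) y \<le> deg (dE - F) (tg b y)"
        unfolding Fb_def dE_def by (rule deg_double_ge[OF fV fE])
      also have "\<dots> \<le> md dV (dE - F)" by (rule md_ge[OF fdV tgV[OF yV]])
      finally show "deg (E - Fb b) y \<le> md V E - 1" using F(3) mdle by simp
    qed
  qed
  have injb: "inj_on ((`) (tg b)) A" for b A by (meson inj_img inj_tg inj_on_subset subset_UNIV)
  have fFb: "finite (Fb b)" for b unfolding Fb_def using fE by simp
  have disj2: "(`) (tg True) ` Fb True \<inter> (`) (tg False) ` Fb False = {}"
  proof (rule ccontr)
    assume "\<not> ?thesis"
    then obtain e1 e2 where e: "e1 \<in> Fb True" "e2 \<in> Fb False" "tg True ` e1 = tg False ` e2" by blast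
    then obtain y where "y \<in> e1" using ne unfolding Fb_def by blast
    hence "tg True y \<in> tg False ` e2" using e(3) by blast
    thus False by (simp only: tg_in_tg) simp
  qed
  have "card (Fb True) + card (Fb False) = card ((`) (tg True) ` Fb True \<union> (`) (tg False) ` Fb False)"
    by (simp add: card_Un_disjoint[OF _ _ disj2] fFb card_image injb)
  also have "\<dots> \<le> card F"
    by (rule card_mono) (use F(1) fdE finite_subset in blast, auto simp: Fb_def)
  finally have "card (Fb True) + card (Fb False) \<le> card F" .
  hence "2 * es_Delta (V,E) \<le> es_Delta (dV,dE)" using esle[of True] esle[of False] F(2) by simp
  thus "2 * es_Delta (V,E) \<le> es_Delta (double (V,E))" unfolding dV_def dE_def pair_collapse .
qed


lemma iter:
  assumes "P (verts H) (edges H)"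
  shows "P (verts ((double^^k) H)) (edges ((double^^k) H)) \<and>
     card (verts ((double^^k) H)) = 2^k * card (verts H) \<and>
     2^k * es_Delta H \<le> es_Delta ((double^^k) H)"
proof (induction k)
  case 0
  then show ?case using assms by simp
next
  case (Suc k)
  let ?H = "(double^^k) H"
  have IH: "P (verts ?H) (edges ?H)" "card (verts ?H) = 2^k * card (verts H)"
    "2^k * es_Delta H \<le> es_Delta ?H" using Suc by auto
  note D = double_main[OF IH(1), unfolded pair_collapse]
  have "2^Suc k * es_Delta H \<le> 2 * es_Delta ?H" using IH(3) by simp
  also have "\<dots> \<le> es_Delta (double ?H)" by (rule D(3))
  finally show ?case using D(1,2) IH(2) by simp
qed

lemma P_G:
  assumes "finite_simple_graph G" and "edges G \<noteq> {}"
  shows "P (verts G) (edges G)"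
proof -
  let ?V = "verts G" and ?E = "edges G"
  have fV: "finite ?V" using assms(1) by (simp add: finite_simple_graph_def)
  have ed: "\<exists>u v. e = {u,v} \<and> u\<noteq>v \<and> u\<in>?V \<and> v\<in>?V" if "e\<in>?E" for e
    using assms(1) that unfolding finite_simple_graph_def by blast
  have sub: "?E \<subseteq> Pow ?V"
  proof
    fix e assume "e \<in> ?E"
    then obtain u v where "e = {u,v}" "u\<in>?V" "v\<in>?V" using ed by blast
    thus "e \<in> Pow ?V" by simp
  qed
  have fE: "finite ?E" using sub fV by (meson finite_Pow_iff finite_subset)
  obtain e where eE: "e \<in> ?E" using assms(2) by blast
  then obtain u v where uv: "e = {u,v}" "u \<in> ?V" using ed by blast
  have nV: "?V \<noteq> {}" using uv by auto
  have "deg ?E u \<ge> 1" unfolding deg_def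
  proof -
    have "{e'\<in>?E. u\<in>e'} \<noteq> {}" using eE uv by auto
    moreover have "finite {e'\<in>?E. u\<in>e'}" using fE by simp
    ultimately show "1 \<le> card {e'\<in>?E. u\<in>e'}" by (simp add: Suc_le_eq card_gt_0_iff)
  qed
  hence "md ?V ?E \<ge> 1" using md_ge[OF fV uv(2), of ?E] by simp
  moreover have "\<forall>e\<in>?E. e \<noteq> {}" using ed by fastforce
  ultimately show ?thesis unfolding P_def using fV nV fE by simp
qed

theorem lemma3p1:
  fixes G :: "'a graph"
  assumes "finite_simple_graph G"
    and "edges G \<noteq> {}"
  shows "real (card (verts (regularization (lift G)))) / real (es_Delta (regularization (lift G)))
           \<le> real (card (verts G)) / real (es_Delta G)"
proof -
  let ?V = "verts G" and ?E = "edges G"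
  define f :: "'a \<Rightarrow> 'a \<times> bool list" where "f = (\<lambda>v. (v, []))"
  have inj: "inj f" unfolding f_def by (rule injI) simp
  have PG: "P ?V ?E" by (rule P_G[OF assms])
  have L: "lift G = (f ` ?V, (`) f ` ?E)" unfolding lift_def f_def by simp
  have PL: "P (verts (lift G)) (edges (lift G))"
    unfolding L using P_image[OF inj PG] by (simp add: verts_def edges_def)
  have cL: "card (verts (lift G)) = card ?V"
    unfolding L verts_def fst_conv using inj by (simp add: card_image inj_on_subset)
  have eL: "es_Delta G \<le> es_Delta (lift G)"
    using lift_es[OF inj PG] unfolding pair_collapse L .
  have epos: "es_Delta G > 0" using es_pos[OF PG] unfolding pair_collapse .
  define k where "k = maxdeg (lift G) - mindeg (lift G)"
  have R: "regularization (lift G) = (double^^k) (lift G)" unfolding regularization_def k_def ..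
  note I = iter[OF PL, of k]
  let ?n = "card (verts G)" and ?e = "es_Delta G" and ?eR = "es_Delta ((double^^k) (lift G))"
  have cR: "card (verts ((double^^k) (lift G))) = 2^k * ?n" using I cL by simp
  have eR: "2^k * ?e \<le> ?eR" using I eL by (meson le_trans mult_le_mono2)
  have eR': "real (2^k * ?e) \<le> real ?eR" using eR by linarith
  have p: "real (2^k * ?e) > 0" using epos by simp
  have "real (2^k * ?n) / real ?eR \<le> real (2^k * ?n) / real (2^k * ?e)"
    by (rule divide_left_mono[OF eR']) (use p eR' in auto)
  also have "\<dots> = real ?n / real ?e" by simp
  finally show ?thesis unfolding R cR .
qed

end
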